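(* Let $R$ be a ring and let $\mathcal{S}$ be a sublattice of the lattice $\mathbb{I}(R)$ of two-sided ideals of $R$ which is closed under arbitrary intersections and contains $\{0\}$ and $R$. Suppose that for each $I\in\mathcal{S}$ we have $I=\ker(\{\mathfrak{p}\in\mathrm{Spec}_{\mathcal{S}}(R):\mathfrak{p}\supseteq I\})$. Let $\mathbb{O}(\mathrm{Spec}_{\mathcal{S}}(R))$ be the lattice of open subsets of $\mathrm{Spec}_{\mathcal{S}}(R)$ in the Jacobson topology, and define $\phi\colon \mathbb{O}(\mathrm{Spec}_{\mathcal{S}}(R))\to\mathcal{S}$ by $\phi(U)=\ker(U^c)$. Then $\phi$ is a lattice isomorphism.
   Context: An ideal $P\in\mathcal{S}$ is $\mathcal{S}$-prime if $P\neq R$ and for all $I,J\in\mathcal{S}$, $IJ\subseteq P$ implies $I\subseteq P$ or $J\subseteq P$; $\mathrm{Spec}_{\mathcal{S}}(R)$ is the set of $\mathcal{S}$-prime ideals. For $T\subseteq\mathrm{Spec}_{\mathcal{S}}(R)$, $\ker(T)=\bigcap_{\mathfrak{p}\in T}\mathfrak{p}$ (with $\ker(\emptyset)=R$), and $U^c$ denotes complement in $\mathrm{Spec}_{\mathcal{S}}(R)$. The Jacobson topology is the topology whose closure operation is $\overline{T}=\{\mathfrak{p}\in\mathrm{Spec}_{\mathcal{S}}(R):\mathfrak{p}\supseteq\ker(T)\}$. *)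

theory Defs
  imports "HOL-Algebra.Ideal_Product"
begin

definition S_prime :: "('a, 'b) ring_scheme \<Rightarrow> 'a set set \<Rightarrow> 'a set \<Rightarrow> bool" where
  "S_prime R S P \<longleftrightarrow> P \<in> S \<and> P \<noteq> carrier R \<and>
     (\<forall>I\<in>S. \<forall>J\<in>S. ideal_prod R I J \<subseteq> P \<longrightarrow> I \<subseteq> P \<or> J \<subseteq> P)"

definition SpecS :: "('a, 'b) ring_scheme \<Rightarrow> 'a set set \<Rightarrow> 'a set set" where
  "SpecS R S = {P. S_prime R S P}"

text \<open>ker(T) = intersection of the members of T, with ker of the empty family = R.\<close>
definition kerS :: "('a, 'b) ring_scheme \<Rightarrow> 'a set set \<Rightarrow> 'a set" where
  "kerS R T = carrier R \<inter> \<Inter> T"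

definition jclosure :: "('a, 'b) ring_scheme \<Rightarrow> 'a set set \<Rightarrow> 'a set set \<Rightarrow> 'a set set" where
  "jclosure R S T = {p \<in> SpecS R S. kerS R T \<subseteq> p}"

definition jacobson_opens :: "('a, 'b) ring_scheme \<Rightarrow> 'a set set \<Rightarrow> 'a set set set" where
  "jacobson_opens R S =
     {U. U \<subseteq> SpecS R S \<and> jclosure R S (SpecS R S - U) = SpecS R S - U}"

definition phiS :: "('a, 'b) ring_scheme \<Rightarrow> 'a set set \<Rightarrow> 'a set set \<Rightarrow> 'a set" where
  "phiS R S U = kerS R (SpecS R S - U)"

end

theory Submission
  imports Defs
begin

lemma sum_sub_iff:
  assumes "ring R" "ideal I R" "ideal J R" "ideal P R"
  shows "I <+>\<^bsub>R\<^esub> J \<subseteq> P \<longleftrightarrow> I \<subseteq> P \<and> J \<subseteq> P"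
proof -
  have e: "Idl\<^bsub>R\<^esub> (I \<union> J) = I <+>\<^bsub>R\<^esub> J"
    using ring.union_genideal[OF assms(1) assms(2,3)] .
  have c: "I \<union> J \<subseteq> carrier R" using assms(2,3) ideal.Icarr by (metis Un_subset_iff subsetI)
  have s: "I \<union> J \<subseteq> Idl\<^bsub>R\<^esub> (I \<union> J)" using ring.genideal_self[OF assms(1) c] .
  show ?thesis
  proof
    assume "I <+>\<^bsub>R\<^esub> J \<subseteq> P" thus "I \<subseteq> P \<and> J \<subseteq> P" using s unfolding e by (meson Un_subset_iff subset_trans)
  next
    assume "I \<subseteq> P \<and> J \<subseteq> P"
    hence "Idl\<^bsub>R\<^esub> (I \<union> J) \<subseteq> P" using ring.genideal_minimal[OF assms(1) assms(4)] by simp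
    thus "I <+>\<^bsub>R\<^esub> J \<subseteq> P" using e by simp
  qed
qed

theorem theorem3p4:
  fixes R :: "('a, 'b) ring_scheme" and S :: "'a set set"
  assumes "ring R"
    and "\<forall>I\<in>S. ideal I R"
    and "\<forall>I\<in>S. \<forall>J\<in>S. I \<inter> J \<in> S"
    and "\<forall>I\<in>S. \<forall>J\<in>S. I <+>\<^bsub>R\<^esub> J \<in> S"
    and "\<forall>F. F \<subseteq> S \<longrightarrow> carrier R \<inter> \<Inter> F \<in> S"
    and "{\<zero>\<^bsub>R\<^esub>} \<in> S"
    and "carrier R \<in> S"
    and "\<forall>I\<in>S. I = kerS R {p \<in> SpecS R S. I \<subseteq> p}"
  shows "bij_betw (phiS R S) (jacobson_opens R S) S \<and>
    (\<forall>U\<in>jacobson_opens R S. \<forall>V\<in>jacobson_opens R S.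
        phiS R S (U \<inter> V) = phiS R S U \<inter> phiS R S V \<and>
        phiS R S (U \<union> V) = phiS R S U <+>\<^bsub>R\<^esub> phiS R S V)"
proof -
  let ?Sp = "SpecS R S"
  have SpS: "?Sp \<subseteq> S" by (auto simp: SpecS_def S_prime_def)
  have clo: "\<And>U. U \<in> jacobson_opens R S \<Longrightarrow> {p \<in> ?Sp. phiS R S U \<subseteq> p} = ?Sp - U"
    by (simp add: jacobson_opens_def jclosure_def phiS_def)
  have opn: "\<And>U. U \<in> jacobson_opens R S \<Longrightarrow> U \<subseteq> ?Sp"
    by (simp add: jacobson_opens_def)
  have inS: "\<And>U. phiS R S U \<in> S"
  proof -
    fix U have "?Sp - U \<subseteq> S" using SpS by blast
    thus "phiS R S U \<in> S" using assms(5) by (simp add: phiS_def kerS_def)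
  qed
  have inj: "inj_on (phiS R S) (jacobson_opens R S)"
  proof (rule inj_onI)
    fix U V assume U: "U \<in> jacobson_opens R S" and V: "V \<in> jacobson_opens R S"
      and eq: "phiS R S U = phiS R S V"
    have "?Sp - U = ?Sp - V" using clo[OF U] clo[OF V] eq by simp
    thus "U = V" using opn[OF U] opn[OF V] by blast
  qed
  have surj: "S \<subseteq> phiS R S ` jacobson_opens R S"
  proof
    fix I assume I: "I \<in> S"
    let ?C = "{p \<in> ?Sp. I \<subseteq> p}"
    have k0: "I = kerS R ?C" using assms(8) I by blast
    hence k: "kerS R ?C = I" by simp
    have dd: "?Sp - (?Sp - ?C) = ?C" by blast
    have jc: "jclosure R S ?C = ?C" by (simp add: jclosure_def k)
    have h: "jclosure R S (?Sp - (?Sp - ?C)) = ?Sp - (?Sp - ?C)" by (simp only: dd jc)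
    have o: "?Sp - ?C \<in> jacobson_opens R S"
      unfolding jacobson_opens_def mem_Collect_eq using h by blast
    note dd
    hence pI: "phiS R S (?Sp - ?C) = I" using k by (simp add: phiS_def)
    show "I \<in> phiS R S ` jacobson_opens R S" by (rule image_eqI[where f="phiS R S", OF pI[symmetric] o])
  qed
  have bij: "bij_betw (phiS R S) (jacobson_opens R S) S"
    unfolding bij_betw_def using inj surj inS by blast
  have ops: "\<forall>U\<in>jacobson_opens R S. \<forall>V\<in>jacobson_opens R S.
        phiS R S (U \<inter> V) = phiS R S U \<inter> phiS R S V \<and>
        phiS R S (U \<union> V) = phiS R S U <+>\<^bsub>R\<^esub> phiS R S V"
  proof (intro ballI conjI)
    fix U V assume U: "U \<in> jacobson_opens R S" and V: "V \<in> jacobson_opens R S"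
    show "phiS R S (U \<inter> V) = phiS R S U \<inter> phiS R S V"
      unfolding phiS_def kerS_def by (auto simp: Diff_Int)
    let ?I = "phiS R S U" and ?J = "phiS R S V"
    have iI: "ideal ?I R" "ideal ?J R" using inS assms(2) by auto
    have sS: "?I <+>\<^bsub>R\<^esub> ?J \<in> S" using inS assms(4) by auto
    have "{p \<in> ?Sp. ?I <+>\<^bsub>R\<^esub> ?J \<subseteq> p} = {p \<in> ?Sp. ?I \<subseteq> p} \<inter> {p \<in> ?Sp. ?J \<subseteq> p}"
    proof -
      have "\<And>p. p \<in> ?Sp \<Longrightarrow> ideal p R" using SpS assms(2) by blast
      thus ?thesis using sum_sub_iff[OF assms(1) iI] by blast
    qed
    also have "\<dots> = ?Sp - (U \<union> V)" using clo[OF U] clo[OF V] by blast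
    finally have fe: "{p \<in> ?Sp. ?I <+>\<^bsub>R\<^esub> ?J \<subseteq> p} = ?Sp - (U \<union> V)" .
    have "?I <+>\<^bsub>R\<^esub> ?J = kerS R {p \<in> ?Sp. ?I <+>\<^bsub>R\<^esub> ?J \<subseteq> p}"
      using assms(8) sS by blast
    hence "?I <+>\<^bsub>R\<^esub> ?J = kerS R (?Sp - (U \<union> V))" using fe by simp
    thus "phiS R S (U \<union> V) = ?I <+>\<^bsub>R\<^esub> ?J" by (simp add: phiS_def)
  qed
  show ?thesis using bij ops by blast
qed

end
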